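(* Let $R$ be a ring with identity and involution $*$, and let $a\in R$. The following conditions are equivalent: (1) $a$ is dual core invertible; (2) $R = a^*R \oplus a^{\circ}$ and $R = aR \oplus a^{\circ}$; (3) $R = a^*R + a^{\circ}$ and $R = aR \oplus a^{\circ}$; (4) $R = Ra \oplus {}^{\circ}(a^* )$ and $R = aR \oplus a^{\circ}$; (5) $R = Ra + {}^{\circ}(a^* )$ and $R = aR \oplus a^{\circ}$; (6) $R = a^*R \oplus a^{\circ}$ and $R = Ra \oplus {}^{\circ}a$; (7) $R = a^*R + a^{\circ}$ and $R = Ra \oplus {}^{\circ}a$; (8) $R = Ra \oplus {}^{\circ}(a^* )$ and $R = Ra \oplus {}^{\circ}a$; (9) $R = Ra + {}^{\circ}(a^* )$ and $R = Ra \oplus {}^{\circ}a$. In this case, $$a_{\oplus} = x_1^* a y_1 = x_1^* a y_2^2 a = x_2 a y_1 = x_2 a y_2^2 a,$$ where $x_1,x_2,y_1,y_2\in R$ are any elements with $1 = a^* x_1 + u_1 = x_2 a + u_2 = a y_1 + v_1 = y_2 a + v_2$ for some $u_2 \in {}^{\circ}(a^* )$, $v_2 \in {}^{\circ}a$ and $u_1, v_1 \in a^{\circ}$.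
   Context: An involution on $R$ satisfies $(a^* )^*=a$, $(ab)^*=b^*a^*$, $(a+b)^*=a^*+b^*$. An element $x\in R$ is a dual core inverse of $a$ if $axa=a$, $xR=a^*R$ and $Rx=Ra$; it is unique, denoted $a_{\oplus}$, and $a$ is then dual core invertible. For $c\in R$: $cR=\{cx: x\in R\}$, $Rc=\{xc:x\in R\}$, $c^{\circ}=\{x\in R: cx=0\}$ (right annihilator), ${}^{\circ}c=\{x\in R: xc=0\}$ (left annihilator). "$R = A \oplus B$" means $R=A+B$ with $A\cap B=\{0\}$. *)

theory Defs
  imports Main
begin

definition involution :: "('a::ring_1 \<Rightarrow> 'a) \<Rightarrow> bool" where
  "involution s \<longleftrightarrow> (\<forall>a. s (s a) = a) \<and> (\<forall>a b. s (a * b) = s b * s a)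
                     \<and> (\<forall>a b. s (a + b) = s a + s b)"

definition rprin :: "'a::ring_1 \<Rightarrow> 'a set" where "rprin c = {c * x | x. True}"
definition lprin :: "'a::ring_1 \<Rightarrow> 'a set" where "lprin c = {x * c | x. True}"
definition rann :: "'a::ring_1 \<Rightarrow> 'a set" where "rann c = {x. c * x = 0}"
definition lann :: "'a::ring_1 \<Rightarrow> 'a set" where "lann c = {x. x * c = 0}"

definition sum_all :: "'a::ring_1 set \<Rightarrow> 'a set \<Rightarrow> bool" where
  "sum_all A B \<longleftrightarrow> (\<forall>r. \<exists>x\<in>A. \<exists>y\<in>B. r = x + y)"
definition dsum_all :: "'a::ring_1 set \<Rightarrow> 'a set \<Rightarrow> bool" where
  "dsum_all A B \<longleftrightarrow> sum_all A B \<and> A \<inter> B = {0}"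

definition is_dual_core_inverse :: "('a::ring_1 \<Rightarrow> 'a) \<Rightarrow> 'a \<Rightarrow> 'a \<Rightarrow> bool" where
  "is_dual_core_inverse s a x \<longleftrightarrow> a * x * a = a \<and> rprin x = rprin (s a) \<and> lprin x = lprin a"
definition dual_core_invertible :: "('a::ring_1 \<Rightarrow> 'a) \<Rightarrow> 'a \<Rightarrow> bool" where
  "dual_core_invertible s a \<longleftrightarrow> (\<exists>x. is_dual_core_inverse s a x)"
definition dual_core_inv :: "('a::ring_1 \<Rightarrow> 'a) \<Rightarrow> 'a \<Rightarrow> 'a" where
  "dual_core_inv s a = (THE x. is_dual_core_inverse s a x)"

end

theory Submission imports Defs begin

lemma inv_ss: "involution s \<Longrightarrow> s (s x) = x" by (simp add: involution_def)
lemma inv_mult: "involution s \<Longrightarrow> s (x * y) = s y * s x" by (simp add: involution_def)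
lemma inv_add: "involution s \<Longrightarrow> s (x + y) = s x + s y" by (simp add: involution_def)

lemma rprin_eq: fixes x c :: "'a::ring_1"
  assumes "x = c * p" "c = x * q" shows "rprin x = rprin c"
  unfolding rprin_def using assms by (auto simp: mult.assoc) (metis mult.assoc)+

lemma lprin_eq: fixes x c :: "'a::ring_1"
  assumes "x = p * c" "c = q * x" shows "lprin x = lprin c"
  unfolding lprin_def using assms by (auto simp: mult.assoc) (metis mult.assoc)+

definition grp :: "'a::ring_1 \<Rightarrow> 'a \<Rightarrow> bool" where
  "grp a g \<longleftrightarrow> a * g * a = a \<and> g * a * g = g \<and> a * g = g * a"

lemma L_dci:
  fixes a :: "'a::ring_1"
  assumes inv: "involution s" and h: "a = a * s a * x1" and g: "grp a g"
  shows "is_dual_core_inverse s a (s x1 * a * g)"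
proof -
  have g1: "a * g * a = a" and g2: "g * a * g = g" and g3: "a * g = g * a" using g by (auto simp: grp_def)
  have sa: "s a = s x1 * a * s a"
    using arg_cong[OF h, of s] inv by (simp add: inv_mult inv_ss mult.assoc)
  have za: "s x1 * a = s a * x1"
  proof -
    have "s x1 * a = s x1 * (a * s a * x1)" using h by simp
    also have "\<dots> = (s x1 * a * s a) * x1" by (simp add: mult.assoc)
    finally show ?thesis using sa by simp
  qed
  have aza: "a * s x1 * a = a" using h za by (simp add: mult.assoc)
  have agg: "a * a * g = a" using g1 g3 by (metis mult.assoc)
  have ggg: "g = g * g * a" using g2 g3 by (simp add: mult.assoc)
  have 1: "a * (s x1 * a * g) * a = a"
  proof -
    have "a * (s x1 * a * g) * a = (a * s x1 * a) * g * a" by (simp add: mult.assoc)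
    thus ?thesis using aza g1 by simp
  qed
  have 2: "rprin (s x1 * a * g) = rprin (s a)"
  proof (rule rprin_eq)
    show "s x1 * a * g = s a * (x1 * g)" using za by (simp add: mult.assoc)
    have "s a = s x1 * (a * g * a) * s a" using sa g1 by simp
    thus "s a = s x1 * a * g * (a * s a)" by (simp add: mult.assoc)
  qed
  have 3: "lprin (s x1 * a * g) = lprin a"
  proof (rule lprin_eq)
    show "s x1 * a * g = (s x1 * a * g * g) * a" by (metis ggg mult.assoc)
    have "a * a * (s x1 * a * g) = a * (a * s x1 * a) * g" by (simp add: mult.assoc)
    also have "\<dots> = a" using aza agg by (simp add: mult.assoc)
    finally show "a = (a * a) * (s x1 * a * g)" by simp
  qed
  show ?thesis unfolding is_dual_core_inverse_def using 1 2 3 by simp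
qed

lemma dci_facts:
  fixes a :: "'a::ring_1"
  assumes inv: "involution s" and d: "is_dual_core_inverse s a X"
  shows "s (X * a) = X * a" "X * a * X = X" "a * a * X = a" "X * X * a = X" "a * X * a = a"
    "X * a * s a = s a"
proof -
  have axa: "a * X * a = a" using d by (simp add: is_dual_core_inverse_def)
  have "X \<in> rprin X" unfolding rprin_def by (auto intro: exI[of _ 1])
  hence "X \<in> rprin (s a)" using d by (simp add: is_dual_core_inverse_def)
  then obtain p where p: "X = s a * p" by (auto simp: rprin_def)
  have "X \<in> lprin X" unfolding lprin_def by (auto intro: exI[of _ 1])
  hence "X \<in> lprin a" using d by (simp add: is_dual_core_inverse_def)
  then obtain r where r: "X = r * a" by (auto simp: lprin_def)
  have "a \<in> lprin a" unfolding lprin_def by (auto intro: exI[of _ 1])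
  hence "a \<in> lprin X" using d by (simp add: is_dual_core_inverse_def)
  then obtain t where t: "a = t * X" by (auto simp: lprin_def)
  have fsf: "X * a = s (X * a) * (X * a)"
  proof -
    have "X * a = s a * (p * a)" using p by (simp add: mult.assoc)
    also have "s a = s (a * (X * a))" using axa by (simp add: mult.assoc)
    also have "\<dots> = s (X * a) * s a" using inv by (simp add: inv_mult)
    finally have "X * a = s (X * a) * (s a * p * a)" by (simp add: mult.assoc)
    thus ?thesis using p by simp
  qed
  show herm: "s (X * a) = X * a"
  proof -
    have "s (X * a) = s (s (X * a) * (X * a))" using fsf by simp
    also have "\<dots> = s (X * a) * (X * a)" using inv by (simp add: inv_mult inv_ss)
    finally show ?thesis using fsf by simp
  qed
  show fsa: "X * a * s a = s a"
  proof -
    have "s a = s (a * (X * a))" using axa by (simp add: mult.assoc)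
    also have "\<dots> = s (X * a) * s a" using inv by (simp add: inv_mult)
    finally show ?thesis using herm by simp
  qed
  show xax: "X * a * X = X" using p fsa by (metis mult.assoc)
  show "a * a * X = a"
  proof -
    have "a * a * X = t * (X * a * X)" using t by (simp add: mult.assoc)
    thus ?thesis using xax t by simp
  qed
  show "X * X * a = X"
  proof -
    have "X * X * a = r * (a * X * a)" using r by (simp add: mult.assoc)
    thus ?thesis using axa r by simp
  qed
  show "a * X * a = a" by (rule axa)
qed

lemma dci_unique:
  fixes a :: "'a::ring_1"
  assumes inv: "involution s" and d: "is_dual_core_inverse s a X" and d': "is_dual_core_inverse s a X'"
  shows "X = X'"
proof -
  note f = dci_facts[OF inv d] and f' = dci_facts[OF inv d']
  have "X \<in> lprin X" unfolding lprin_def by (auto intro: exI[of _ 1])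
  hence "X \<in> lprin a" using d by (simp add: is_dual_core_inverse_def)
  then obtain r where r: "X = r * a" by (auto simp: lprin_def)
  have e: "X * a = X' * a"
  proof -
    have "X * a = s (X * a)" using f by simp
    also have "\<dots> = s a * s X" using inv by (simp add: inv_mult)
    also have "\<dots> = s (a * X' * a) * s X" using f' by simp
    also have "\<dots> = s (X' * a) * s (X * a)" using inv by (simp add: inv_mult mult.assoc)
    also have "\<dots> = X' * (a * X * a)" using f f' by (simp add: mult.assoc)
    finally show ?thesis using f by simp
  qed
  have "X * a * X' = r * (a * a * X')" using r by (simp add: mult.assoc)
  hence xx: "X * a * X' = X" using f' r by simp
  show ?thesis using xx e f' by simp
qed

lemma dsumI:
  assumes "\<And>r. \<exists>x\<in>A. \<exists>y\<in>B. r = x + y" "(0::'a::ring_1) \<in> A" "0 \<in> B"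
    "\<And>z. z \<in> A \<Longrightarrow> z \<in> B \<Longrightarrow> z = 0"
  shows "dsum_all A B"
  unfolding dsum_all_def sum_all_def using assms by blast

lemma dsum_sum: "dsum_all A B \<Longrightarrow> sum_all A B" by (simp add: dsum_all_def)

lemma dsum_int: "dsum_all A B \<Longrightarrow> z \<in> A \<Longrightarrow> z \<in> B \<Longrightarrow> z = 0"
  unfolding dsum_all_def by blast

lemma Q1:
  fixes a :: "'a::ring_1"
  assumes d: "dsum_all (rprin a) (rann a)" and e: "1 = a * y + v" and v: "a * v = 0"
  shows "grp a (a * y * y)"
proof -
  have aay: "a * a * y = a"
  proof -
    have "a = a * (a * y + v)" using e by (metis mult.right_neutral)
    thus ?thesis using v by (simp add: distrib_left mult.assoc)
  qed
  have aya: "a * y * a = a"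
  proof -
    have "a - a * y * a = 0"
    proof (rule dsum_int[OF d])
      show "a - a * y * a \<in> rprin a" unfolding rprin_def
        by (auto intro!: exI[of _ "1 - y * a"] simp: right_diff_distrib mult.assoc)
      have "a * (a - a * y * a) = a * a - (a * a * y) * a" by (simp add: right_diff_distrib mult.assoc)
      thus "a - a * y * a \<in> rann a" unfolding rann_def using aay by simp
    qed
    thus ?thesis by simp
  qed
  have ayya: "a * y * y * a = a * y"
  proof -
    have "a * y * y * a - a * y = 0"
    proof (rule dsum_int[OF d])
      show "a * y * y * a - a * y \<in> rprin a" unfolding rprin_def
        by (auto intro!: exI[of _ "y * y * a - y"] simp: right_diff_distrib mult.assoc)
      have "a * (a * y * y * a - a * y) = (a * a * y) * y * a - a * a * y"
        by (simp add: right_diff_distrib mult.assoc)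
      also have "\<dots> = 0" using aay aya by simp
      finally show "a * y * y * a - a * y \<in> rann a" unfolding rann_def by simp
    qed
    thus ?thesis by simp
  qed
  show ?thesis unfolding grp_def
  proof (intro conjI)
    show "a * (a * y * y) * a = a" using ayya aay by (metis mult.assoc)
    have "a * y * y * a * (a * y * y) = (a * y * a) * y * y" using ayya by (metis mult.assoc)
    thus "a * y * y * a * (a * y * y) = a * y * y" using aya by simp
    have "a * (a * y * y) = (a * a * y) * y" by (simp add: mult.assoc)
    thus "a * (a * y * y) = a * y * y * a" using aay ayya by simp
  qed
qed

lemma Q2:
  fixes a :: "'a::ring_1"
  assumes d: "dsum_all (lprin a) (lann a)" and e: "1 = y * a + v" and v: "v * a = 0"
  shows "grp a (y * y * a)"
proof -
  have aay: "y * a * a = a"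
  proof -
    have "a = (y * a + v) * a" using e by (metis mult.left_neutral)
    thus ?thesis using v by (simp add: distrib_right mult.assoc)
  qed
  have aya: "a * y * a = a"
  proof -
    have "a - a * y * a = 0"
    proof (rule dsum_int[OF d])
      show "a - a * y * a \<in> lprin a" unfolding lprin_def
        by (auto intro!: exI[of _ "1 - a * y"] simp: left_diff_distrib mult.assoc)
      have "(a - a * y * a) * a = a * a - a * (y * a * a)" by (simp add: left_diff_distrib mult.assoc)
      thus "a - a * y * a \<in> lann a" unfolding lann_def using aay by simp
    qed
    thus ?thesis by simp
  qed
  have ayya: "a * y * y * a = y * a"
  proof -
    have "a * y * y * a - y * a = 0"
    proof (rule dsum_int[OF d])
      show "a * y * y * a - y * a \<in> lprin a" unfolding lprin_def
        by (auto intro!: exI[of _ "a * y * y - y"] simp: left_diff_distrib mult.assoc)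
      have "(a * y * y * a - y * a) * a = a * y * (y * a * a) - y * a * a"
        by (simp add: left_diff_distrib mult.assoc)
      also have "\<dots> = 0" using aay aya by simp
      finally show "a * y * y * a - y * a \<in> lann a" unfolding lann_def by simp
    qed
    thus ?thesis by simp
  qed
  show ?thesis unfolding grp_def
  proof (intro conjI)
    show "a * (y * y * a) * a = a" using ayya aay by (metis mult.assoc)
    have "y * y * a * a * (y * y * a) = y * (y * a * a) * y * y * a" by (simp add: mult.assoc)
    also have "\<dots> = y * (a * y * y * a)" using aay by (simp add: mult.assoc)
    finally show "y * y * a * a * (y * y * a) = y * y * a" using ayya by (simp add: mult.assoc)
    have "y * y * a * a = y * (y * a * a)" by (simp add: mult.assoc)
    thus "a * (y * y * a) = y * y * a * a" using aay ayya by (simp add: mult.assoc)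
  qed
qed

lemma Q1ex: "dsum_all (rprin a) (rann (a::'a::ring_1)) \<Longrightarrow> \<exists>g. grp a g"
proof -
  assume d: "dsum_all (rprin a) (rann a)"
  then obtain x y where "x \<in> rprin a" "y \<in> rann a" "1 = x + y"
    unfolding dsum_all_def sum_all_def by blast
  then obtain m where "1 = a * m + y" "a * y = 0" by (auto simp: rprin_def rann_def)
  thus ?thesis using Q1[OF d] by blast
qed

lemma Q2ex: "dsum_all (lprin a) (lann (a::'a::ring_1)) \<Longrightarrow> \<exists>g. grp a g"
proof -
  assume d: "dsum_all (lprin a) (lann a)"
  then obtain x y where "x \<in> lprin a" "y \<in> lann a" "1 = x + y"
    unfolding dsum_all_def sum_all_def by blast
  then obtain m where "1 = m * a + y" "y * a = 0" by (auto simp: lprin_def lann_def)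
  thus ?thesis using Q2[OF d] by blast
qed

lemma P1a: fixes a :: "'a::ring_1"
  assumes "1 = s a * x + u" "a * u = 0" shows "a = a * s a * x"
proof -
  have "a = a * (s a * x + u)" using assms by (metis mult.right_neutral)
  also have "\<dots> = a * s a * x + a * u" by (simp add: distrib_left mult.assoc)
  finally show ?thesis using assms(2) by simp
qed

lemma P2a: fixes a :: "'a::ring_1"
  assumes inv: "involution s" and "1 = x * a + u" "u * s a = 0" shows "a = a * s a * s x"
proof -
  have "s a = (x * a + u) * s a" using assms by (metis mult.left_neutral)
  also have "\<dots> = x * a * s a + u * s a" by (simp add: distrib_right)
  finally have "s a = x * a * s a" using assms(3) by simp
  hence "s (s a) = s (x * a * s a)" by simp
  thus ?thesis using inv by (simp add: inv_mult inv_ss mult.assoc)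
qed

lemma P1: "sum_all (rprin (s a)) (rann (a::'a::ring_1)) \<Longrightarrow> \<exists>x. a = a * s a * x"
proof -
  assume "sum_all (rprin (s a)) (rann a)"
  then obtain x y where "x \<in> rprin (s a)" "y \<in> rann a" "1 = x + y"
    unfolding sum_all_def by blast
  then obtain m where "1 = s a * m + y" "a * y = 0" by (auto simp: rprin_def rann_def)
  thus ?thesis using P1a by blast
qed

lemma P2: "involution s \<Longrightarrow> sum_all (lprin a) (lann (s (a::'a::ring_1))) \<Longrightarrow> \<exists>x. a = a * s a * x"
proof -
  assume inv: "involution s" and "sum_all (lprin a) (lann (s a))"
  then obtain x y where "x \<in> lprin a" "y \<in> lann (s a)" "1 = x + y"
    unfolding sum_all_def by blast
  then obtain m where "1 = m * a + y" "y * s a = 0" by (auto simp: lprin_def lann_def)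
  thus ?thesis using P2a[OF inv] by blast
qed

lemma D_dsums:
  fixes a :: "'a::ring_1"
  assumes inv: "involution s" and d: "is_dual_core_inverse s a X"
  shows "dsum_all (rprin a) (rann a)" "dsum_all (lprin a) (lann a)"
    "dsum_all (rprin (s a)) (rann a)" "dsum_all (lprin a) (lann (s a))"
proof -
  note f = dci_facts[OF inv d]
  have k: "a * X * X * a * a = a"
  proof -
    have "a * X * X * a * a = a * (X * X * a) * a" by (simp add: mult.assoc)
    thus ?thesis using f by simp
  qed
  have xa: "X * a = s a * s X" using f(1) inv by (metis inv_mult)
  have z1: "0 \<in> rprin c" "0 \<in> lprin c" "0 \<in> rann c" "0 \<in> lann c" for c :: 'a
    unfolding rprin_def lprin_def rann_def lann_def by (auto intro: exI[of _ 0])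
  show "dsum_all (rprin a) (rann a)"
  proof (rule dsumI[OF _ z1(1) z1(3)])
    fix r
    have "a * X * r \<in> rprin a" unfolding rprin_def by (auto simp: mult.assoc)
    moreover have "r - a * X * r \<in> rann a"
    proof -
      have "a * (r - a * X * r) = a * r - (a * a * X) * r" by (simp add: right_diff_distrib mult.assoc)
      thus ?thesis using f unfolding rann_def by simp
    qed
    ultimately show "\<exists>x\<in>rprin a. \<exists>y\<in>rann a. r = x + y" by force
  next
    fix z assume "z \<in> rprin a" "z \<in> rann a"
    then obtain m where m: "z = a * m" and az: "a * z = 0" by (auto simp: rprin_def rann_def)
    have "z = (a * X * X * a * a) * m" using k m by simp
    also have "\<dots> = a * X * X * a * z" using m by (simp add: mult.assoc)
    finally show "z = 0" using az by (simp add: mult.assoc)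
  qed
  show "dsum_all (lprin a) (lann a)"
  proof (rule dsumI[OF _ z1(2) z1(4)])
    fix r
    have "r * (a * X * X * a) \<in> lprin a" unfolding lprin_def
      by (auto intro!: exI[of _ "r * a * X * X"] simp: mult.assoc)
    moreover have "r - r * (a * X * X * a) \<in> lann a"
    proof -
      have "(r - r * (a * X * X * a)) * a = r * a - r * (a * X * X * a * a)"
        by (simp add: left_diff_distrib mult.assoc)
      thus ?thesis using k unfolding lann_def by simp
    qed
    ultimately show "\<exists>x\<in>lprin a. \<exists>y\<in>lann a. r = x + y" by force
  next
    fix z assume "z \<in> lprin a" "z \<in> lann a"
    then obtain m where m: "z = m * a" and az: "z * a = 0" by (auto simp: lprin_def lann_def)
    have "z = m * (a * a * X)" using f m by simp
    also have "\<dots> = z * a * X" using m by (simp add: mult.assoc)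
    finally show "z = 0" using az by simp
  qed
  show "dsum_all (rprin (s a)) (rann a)"
  proof (rule dsumI[OF _ z1(1) z1(3)])
    fix r
    have "X * a * r \<in> rprin (s a)" unfolding rprin_def using xa by (auto simp: mult.assoc)
    moreover have "r - X * a * r \<in> rann a"
    proof -
      have "a * (r - X * a * r) = a * r - (a * X * a) * r" by (simp add: right_diff_distrib mult.assoc)
      thus ?thesis using f unfolding rann_def by simp
    qed
    ultimately show "\<exists>x\<in>rprin (s a). \<exists>y\<in>rann a. r = x + y" by force
  next
    fix z assume "z \<in> rprin (s a)" "z \<in> rann a"
    then obtain m where m: "z = s a * m" and az: "a * z = 0" by (auto simp: rprin_def rann_def)
    have "z = X * a * s a * m" using f m by simp
    also have "\<dots> = X * (a * z)" using m by (simp add: mult.assoc)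
    finally show "z = 0" using az by simp
  qed
  show "dsum_all (lprin a) (lann (s a))"
  proof (rule dsumI[OF _ z1(2) z1(4)])
    fix r
    have "r * X * a \<in> lprin a" unfolding lprin_def by (auto intro!: exI[of _ "r * X"])
    moreover have "r - r * X * a \<in> lann (s a)"
    proof -
      have "(r - r * X * a) * s a = r * s a - r * (X * a * s a)"
        by (simp add: left_diff_distrib mult.assoc)
      thus ?thesis using f unfolding lann_def by simp
    qed
    ultimately show "\<exists>x\<in>lprin a. \<exists>y\<in>lann (s a). r = x + y" by force
  next
    fix z assume "z \<in> lprin a" "z \<in> lann (s a)"
    then obtain m where m: "z = m * a" and az: "z * s a = 0" by (auto simp: lprin_def lann_def)
    have "z = m * (a * X * a)" using f m by simp
    also have "\<dots> = z * s a * s X" using m xa by (simp add: mult.assoc)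
    finally show "z = 0" using az by simp
  qed
qed

lemma D_from: "involution s \<Longrightarrow> \<exists>x. a = a * s a * x \<Longrightarrow> \<exists>g. grp a g \<Longrightarrow> dual_core_invertible s a"
  unfolding dual_core_invertible_def using L_dci by blast

theorem proposition2p12:
  fixes s :: "'a::ring_1 \<Rightarrow> 'a" and a :: 'a
  assumes "involution s"
  shows "(dual_core_invertible s a \<longleftrightarrow> dsum_all (rprin (s a)) (rann a) \<and> dsum_all (rprin a) (rann a))
       \<and> (dual_core_invertible s a \<longleftrightarrow> sum_all (rprin (s a)) (rann a) \<and> dsum_all (rprin a) (rann a))
       \<and> (dual_core_invertible s a \<longleftrightarrow> dsum_all (lprin a) (lann (s a)) \<and> dsum_all (rprin a) (rann a))
       \<and> (dual_core_invertible s a \<longleftrightarrow> sum_all (lprin a) (lann (s a)) \<and> dsum_all (rprin a) (rann a))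
       \<and> (dual_core_invertible s a \<longleftrightarrow> dsum_all (rprin (s a)) (rann a) \<and> dsum_all (lprin a) (lann a))
       \<and> (dual_core_invertible s a \<longleftrightarrow> sum_all (rprin (s a)) (rann a) \<and> dsum_all (lprin a) (lann a))
       \<and> (dual_core_invertible s a \<longleftrightarrow> dsum_all (lprin a) (lann (s a)) \<and> dsum_all (lprin a) (lann a))
       \<and> (dual_core_invertible s a \<longleftrightarrow> sum_all (lprin a) (lann (s a)) \<and> dsum_all (lprin a) (lann a))
       \<and> (dual_core_invertible s a \<longrightarrow>
           (\<forall>x1 x2 y1 y2 u1 u2 v1 v2.
              u2 \<in> lann (s a) \<and> v2 \<in> lann a \<and> u1 \<in> rann a \<and> v1 \<in> rann a \<and>
              1 = s a * x1 + u1 \<and> 1 = x2 * a + u2 \<and> 1 = a * y1 + v1 \<and> 1 = y2 * a + v2 \<longrightarrow>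
              dual_core_inv s a = s x1 * a * y1 \<and>
              dual_core_inv s a = s x1 * a * y2\<^sup>2 * a \<and>
              dual_core_inv s a = x2 * a * y1 \<and>
              dual_core_inv s a = x2 * a * y2\<^sup>2 * a))"
proof -
  note inv = assms
  have fwd: "dsum_all (rprin a) (rann a) \<and> dsum_all (lprin a) (lann a) \<and>
    dsum_all (rprin (s a)) (rann a) \<and> dsum_all (lprin a) (lann (s a))"
    if "dual_core_invertible s a"
    using that D_dsums[OF inv] unfolding dual_core_invertible_def by blast
  have b1: "dual_core_invertible s a" if "sum_all (rprin (s a)) (rann a)" "\<exists>g. grp a g"
    using D_from[OF inv] P1 that by blast
  have b2: "dual_core_invertible s a" if "sum_all (lprin a) (lann (s a))" "\<exists>g. grp a g"
    using D_from[OF inv] P2[OF inv] that by blast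
  have formula: "dual_core_inv s a = s x1 * a * y1 \<and>
              dual_core_inv s a = s x1 * a * y2\<^sup>2 * a \<and>
              dual_core_inv s a = x2 * a * y1 \<and>
              dual_core_inv s a = x2 * a * y2\<^sup>2 * a"
    if D: "dual_core_invertible s a" and h: "u2 \<in> lann (s a)" "v2 \<in> lann a" "u1 \<in> rann a" "v1 \<in> rann a"
       "1 = s a * x1 + u1" "1 = x2 * a + u2" "1 = a * y1 + v1" "1 = y2 * a + v2" for x1 x2 y1 y2 u1 u2 v1 v2
  proof -
    from D obtain X where X: "is_dual_core_inverse s a X" unfolding dual_core_invertible_def by blast
    have the: "dual_core_inv s a = X" unfolding dual_core_inv_def
      using X by (intro the_equality) (auto intro: dci_unique[OF inv, symmetric])
    have h1: "a = a * s a * x1" using P1a h by (auto simp: rann_def)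
    have h2: "a = a * s a * s x2" using P2a[OF inv] h by (auto simp: lann_def)
    have g1: "grp a (a * y1 * y1)" using Q1 D_dsums(1)[OF inv X] h by (auto simp: rann_def)
    have g2: "grp a (y2 * y2 * a)" using Q2 D_dsums(2)[OF inv X] h by (auto simp: lann_def)
    have aay: "a * a * y1 = a"
    proof -
      have "a = a * (a * y1 + v1)" using h by (metis mult.right_neutral)
      also have "\<dots> = a * a * y1 + a * v1" by (simp add: distrib_left mult.assoc)
      finally show ?thesis using h by (simp add: rann_def)
    qed
    have e1: "s x1 * a * (a * y1 * y1) = s x1 * a * y1" using aay by (metis mult.assoc)
    have e2: "s (s x2) * a * (a * y1 * y1) = x2 * a * y1" using aay inv by (metis mult.assoc inv_ss)
    have e3: "s (s x2) * a * (y2 * y2 * a) = x2 * a * y2\<^sup>2 * a" using inv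
      by (simp add: inv_ss power2_eq_square mult.assoc)
    have e4: "s x1 * a * (y2 * y2 * a) = s x1 * a * y2\<^sup>2 * a"
      by (simp add: power2_eq_square mult.assoc)
    show ?thesis
      using dci_unique[OF inv X L_dci[OF inv h1 g1]] dci_unique[OF inv X L_dci[OF inv h1 g2]]
        dci_unique[OF inv X L_dci[OF inv h2 g1]] dci_unique[OF inv X L_dci[OF inv h2 g2]]
        e1 e2 e3 e4 the by simp
  qed
  show ?thesis
    using fwd b1 b2 dsum_sum Q1ex Q2ex formula by meson
qed

end
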